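(* Let $\lambda>0$ and $\Delta\ge1$, and define $y_1=1$ and $y_k=(1+\lambda\Delta y_{k-1})^{-1}$ for $k\geq 2$. Then $\lim_{k\to \infty} y_k= \frac{2}{1+\sqrt{1+4\lambda\Delta}}$. Moreover, defining $\underline{h}(\epsilon,\Delta) = \sup\{h:\ |y_{h}-y_{h-1}|\geq \epsilon\}$, we have $$\lim_{\Delta\to \infty}\frac{1}{\sqrt{\Delta}}\lim_{\epsilon\to 0}\frac{\underline{h}(\epsilon,\Delta)}{\log(1/\epsilon)} = \sqrt{\lambda}.$$ *)

theory Defs
  imports Complex_Main
begin

text \<open>The sequence y_k (paper indexing, k \<ge> 1): y_1 = 1, y_k = 1/(1 + lam*D*y_(k-1)) for k \<ge> 2.
  The value at index 0 is an unused dummy (set to 1).\<close>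
primrec yseq :: "real \<Rightarrow> real \<Rightarrow> nat \<Rightarrow> real" where
  "yseq lam D 0 = 1"
| "yseq lam D (Suc k) = (if k = 0 then 1 else inverse (1 + lam * D * yseq lam D k))"

text \<open>h_low(eps, D) = sup { h : |y_h - y_(h-1)| \<ge> eps }, with h ranging over indices h \<ge> 2
  (where both y_h and y_(h-1) are defined).\<close>
definition hlow :: "real \<Rightarrow> real \<Rightarrow> real \<Rightarrow> nat" where
  "hlow lam D eps = Sup {h::nat. h \<ge> 2 \<and> \<bar>yseq lam D h - yseq lam D (h - 1)\<bar> \<ge> eps}"

end

theory Submission
  imports Defs "HOL-Real_Asymp.Real_Asymp"
begin

fun pp :: "real \<Rightarrow> nat \<Rightarrow> real" where
  "pp a 0 = 0"
| "pp a (Suc 0) = 1"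
| "pp a (Suc (Suc n)) = pp a (Suc n) + a * pp a n"

lemma pp_basic: assumes "a > 0" shows "0 \<le> pp a n \<and> 1 \<le> pp a (Suc n)"
proof (induction n)
  case 0 then show ?case by simp
next
  case (Suc n)
  then have "0 \<le> a * pp a n" using assms by simp
  with Suc show ?case by simp
qed

lemma yseq_pp: assumes "lam * D > 0"
  shows "yseq lam D (Suc n) = pp (lam*D) (Suc n) / pp (lam*D) (Suc (Suc n))"
proof (induction n)
  case 0 then show ?case by simp
next
  case (Suc n)
  define P1 where "P1 = pp (lam*D) (Suc n)"
  define P2 where "P2 = pp (lam*D) (Suc (Suc n))"
  have p1: "P1 \<ge> 1" unfolding P1_def using pp_basic[OF assms] by blast
  have p2: "P2 \<ge> 1" unfolding P2_def using pp_basic[OF assms] by blast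
  have e3: "pp (lam*D) (Suc (Suc (Suc n))) = P2 + lam*D*P1" by (simp add: P1_def P2_def)
  have "yseq lam D (Suc (Suc n)) = inverse (1 + lam * D * (P1/P2))"
    using Suc by (simp add: P1_def P2_def)
  also have "\<dots> = P2 / (P2 + lam*D*P1)"
    using p1 p2 assms by (simp add: field_simps)
  also have "\<dots> = pp (lam*D) (Suc (Suc n)) / pp (lam*D) (Suc (Suc (Suc n)))"
    by (simp only: e3 P2_def)
  finally show ?case .
qed

lemma pp_cassini: "pp a (Suc n)^2 - pp a n * pp a (Suc (Suc n)) = (-a)^n"
proof (induction n)
  case 0 then show ?case by simp
next
  case (Suc n)
  have e: "pp a (Suc (Suc (Suc n))) = pp a (Suc (Suc n)) + a * pp a (Suc n)" by simp
  have e2: "pp a (Suc (Suc n)) = pp a (Suc n) + a * pp a n" by simp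
  have "pp a (Suc (Suc n))^2 - pp a (Suc n) * pp a (Suc (Suc (Suc n)))
      = -a * (pp a (Suc n)^2 - pp a n * pp a (Suc (Suc n)))"
    unfolding e e2 by (simp add: algebra_simps power2_eq_square)
  then show ?case using Suc by simp
qed

lemma yseq_diff: assumes "lam * D > 0"
  shows "yseq lam D (Suc (Suc k)) - yseq lam D (Suc k)
    = (-(lam*D))^(Suc k) / (pp (lam*D) (Suc (Suc k)) * pp (lam*D) (Suc (Suc (Suc k))))"
proof -
  define P1 where "P1 = pp (lam*D) (Suc k)"
  define P2 where "P2 = pp (lam*D) (Suc (Suc k))"
  define P3 where "P3 = pp (lam*D) (Suc (Suc (Suc k)))"
  have p2: "P2 \<ge> 1" unfolding P2_def using pp_basic[OF assms] by blast
  have p3: "P3 \<ge> 1" unfolding P3_def using pp_basic[OF assms] by blast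
  have c: "P2^2 - P1*P3 = (-(lam*D))^(Suc k)"
    unfolding P1_def P2_def P3_def by (rule pp_cassini)
  have "yseq lam D (Suc (Suc k)) - yseq lam D (Suc k) = P2/P3 - P1/P2"
    using yseq_pp[OF assms, of "Suc k"] yseq_pp[OF assms, of k]
    by (simp add: P1_def P2_def P3_def)
  also have "\<dots> = (P2^2 - P1*P3)/(P2*P3)"
    using p2 p3 by (simp add: field_simps power2_eq_square)
  finally show ?thesis using c by (simp add: P2_def P3_def)
qed

lemma al_facts:
  fixes a :: real
  assumes "a > 0"
  defines "al \<equiv> (1 + sqrt (1 + 4*a)) / 2"
  shows "al \<ge> 1" "al * al = al + a"
proof -
  have s: "sqrt (1+4*a) \<ge> 1" using assms by simp
  then show "al \<ge> 1" unfolding al_def by simp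
  have ss: "sqrt (1+4*a) * sqrt (1+4*a) = 1 + 4*a" using assms by simp
  show "al * al = al + a" unfolding al_def using ss by (simp add: field_simps)
qed

lemma pp_upper:
  assumes a: "a > 0" and al1: "al \<ge> 1" and alq: "al * al = al + a"
  shows "pp a n \<le> al^n \<and> pp a (Suc n) \<le> al^(Suc n)"
proof (induction n)
  case 0 then show ?case using al1 by simp
next
  case (Suc n)
  have "a * pp a n \<le> a * al^n" using Suc a by (simp add: mult_left_mono)
  then have "pp a (Suc (Suc n)) \<le> al^(Suc n) + a * al^n" using Suc by simp
  also have "\<dots> = al^n * (al*al)" using alq by (simp add: algebra_simps)
  also have "\<dots> = al^(Suc (Suc n))" by (simp add: algebra_simps)
  finally show ?case using Suc by simp
qed

lemma pp_lower:
  assumes a: "a > 0" and al1: "al \<ge> 1" and alq: "al * al = al + a"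
  shows "al^(Suc n) \<le> al^2 * pp a (Suc n) \<and> al^(Suc (Suc n)) \<le> al^2 * pp a (Suc (Suc n))"
proof (induction n)
  case 0 then show ?case using al1 by (simp add: power2_eq_square)
next
  case (Suc n)
  have "a * al^(Suc n) \<le> a * (al^2 * pp a (Suc n))" using Suc a by (simp add: mult_left_mono)
  then have 1: "al^(Suc (Suc n)) + a * al^(Suc n) \<le> al^2 * pp a (Suc (Suc n)) + a * (al^2 * pp a (Suc n))"
    using Suc by linarith
  have 2: "al^2 * pp a (Suc (Suc (Suc n))) = al^2 * pp a (Suc (Suc n)) + a * (al^2 * pp a (Suc n))"
    by (simp only: pp.simps) (simp add: algebra_simps)
  have 3: "al^(Suc (Suc n)) + a * al^(Suc n) = al^(Suc n) * (al*al)" using alq by (simp add: algebra_simps)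
  have 4: "al^(Suc n) * (al*al) = al^(Suc (Suc (Suc n)))" by (simp add: algebra_simps)
  have "al^(Suc (Suc (Suc n))) \<le> al^2 * pp a (Suc (Suc (Suc n)))"
    using 1 2 3 4 by linarith
  then show ?case using Suc by blast
qed


lemma pp_closed:
  assumes a: "a > 0"
  defines "s \<equiv> sqrt (1 + 4*a)"
  defines "al \<equiv> (1 + s)/2" and "be \<equiv> (1 - s)/2"
  shows "pp a n = (al^n - be^n)/s"
proof -
  have s1: "s \<ge> 1" using a by (simp add: s_def)
  have ss: "s*s = 1 + 4*a" using a by (simp add: s_def)
  have alq: "al*al = al + a" unfolding al_def using ss by (simp add: field_simps)
  have beq: "be*be = be + a" unfolding be_def using ss by (simp add: field_simps)
  have "pp a n = (al^n - be^n)/s \<and> pp a (Suc n) = (al^(Suc n) - be^(Suc n))/s"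
  proof (induction n)
    case 0 then show ?case using s1 by (simp add: al_def be_def field_simps)
  next
    case (Suc n)
    have "al^(Suc (Suc n)) = al^n*(al*al)" "be^(Suc (Suc n)) = be^n*(be*be)"
      by (simp_all add: algebra_simps)
    note pw = this
    have p0: "s * pp a n = al^n - be^n" and p1: "s * pp a (Suc n) = al^(Suc n) - be^(Suc n)"
      using Suc s1 by (simp_all add: field_simps)
    have "s * pp a (Suc (Suc n)) = s * pp a (Suc n) + a * (s * pp a n)" by (simp add: algebra_simps)
    also have "\<dots> = al^(Suc (Suc n)) - be^(Suc (Suc n))"
      unfolding p0 p1 pw alq beq by (simp add: algebra_simps)
    finally have "pp a (Suc (Suc n)) = (al^(Suc (Suc n)) - be^(Suc (Suc n)))/s"
      using s1 by (simp add: field_simps)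
    then show ?case using Suc by blast
  qed
  then show ?thesis by blast
qed

lemma yseq_lim:
  assumes a: "lam * D > 0"
  shows "yseq lam D \<longlonglongrightarrow> 2 / (1 + sqrt (1 + 4 * lam * D))"
proof -
  define a where "a = lam * D"
  define s where "s = sqrt (1 + 4*a)"
  define al where "al = (1 + s)/2"
  define be where "be = (1 - s)/2"
  define t where "t = be / al"
  have a0: "a > 0" using a by (simp add: a_def)
  have s1: "s \<ge> 1" using a0 by (simp add: s_def)
  have al1: "al \<ge> 1" using s1 by (simp add: al_def)
  have bel: "\<bar>be\<bar> < al" using s1 by (simp add: al_def be_def)
  have nt: "norm t < 1" using bel al1 by (simp add: t_def abs_divide)
  have eq: "yseq lam D (Suc n) = (1 - t^(Suc n)) / (al - be * t^(Suc n))" for n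
  proof -
    have A: "al^(Suc n) * t^(Suc n) = be^(Suc n)"
      using al1 by (simp add: t_def power_divide)
    have den: "al - be * t^(Suc n) \<noteq> 0"
    proof -
      have "\<bar>be * t^(Suc n)\<bar> \<le> \<bar>be\<bar>"
      proof -
        have "\<bar>t\<bar>^(Suc n) \<le> 1" using nt by (intro power_le_one) auto
        then show ?thesis by (simp add: abs_mult power_abs mult_left_le)
      qed
      then show ?thesis using bel by linarith
    qed
    have "yseq lam D (Suc n) = pp a (Suc n) / pp a (Suc (Suc n))"
      using yseq_pp[OF a] by (simp add: a_def)
    also have "\<dots> = (al^(Suc n) - be^(Suc n)) / (al^(Suc (Suc n)) - be^(Suc (Suc n)))"
    proof -
      have "pp a (Suc n) = (al^(Suc n) - be^(Suc n))/s" "pp a (Suc (Suc n)) = (al^(Suc (Suc n)) - be^(Suc (Suc n)))/s"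
        using pp_closed[OF a0, of "Suc n"] pp_closed[OF a0, of "Suc (Suc n)"]
        by (simp_all only: s_def al_def be_def)
      then show ?thesis using s1 by simp
    qed
    also have "\<dots> = (al^(Suc n) * (1 - t^(Suc n))) / (al^(Suc n) * (al - be * t^(Suc n)))"
      using A by (simp add: algebra_simps)
    also have "\<dots> = (1 - t^(Suc n)) / (al - be * t^(Suc n))"
      using al1 by simp
    finally show ?thesis .
  qed
  have L: "(\<lambda>n. (1 - t^n) / (al - be * t^n)) \<longlonglongrightarrow> (1 - 0) / (al - be * 0)"
    by (intro tendsto_intros LIMSEQ_power_zero nt) (use al1 in simp)
  have "(\<lambda>n. yseq lam D (Suc n)) \<longlonglongrightarrow> 1 / al"
    using LIMSEQ_Suc[OF L] unfolding eq by simp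
  then have "yseq lam D \<longlonglongrightarrow> 1 / al" by (rule LIMSEQ_imp_Suc)
  moreover have "1 / al = 2 / (1 + sqrt (1 + 4 * lam * D))"
    by (simp add: al_def s_def a_def)
  ultimately show ?thesis by simp
qed

lemma d_bounds:
  assumes a: "lam * D > 0" and h: "h \<ge> 2"
  defines "al \<equiv> (1 + sqrt (1 + 4 * (lam*D))) / 2"
  defines "q \<equiv> lam * D / al^2"
  shows "(1/(q*al^3)) * q^h \<le> \<bar>yseq lam D h - yseq lam D (h - 1)\<bar>"
    and "\<bar>yseq lam D h - yseq lam D (h - 1)\<bar> \<le> (al/q) * q^h"
proof -
  define a where "a = lam * D"
  have a0: "a > 0" using a by (simp add: a_def)
  have al1: "al \<ge> 1" and alq: "al*al = al + a"
    using al_facts[OF a0] by (simp_all add: al_def a_def)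
  obtain k where k: "h = Suc (Suc k)" using h by (metis add_2_eq_Suc le_Suc_ex)
  define P2 where "P2 = pp a (Suc (Suc k))"
  define P3 where "P3 = pp a (Suc (Suc (Suc k)))"
  have p2: "P2 \<ge> 1" unfolding P2_def using pp_basic[OF a0] by blast
  have p3: "P3 \<ge> 1" unfolding P3_def using pp_basic[OF a0] by blast
  have dd: "\<bar>yseq lam D h - yseq lam D (h - 1)\<bar> = a^(Suc k) / (P2*P3)"
  proof -
    have e: "yseq lam D h - yseq lam D (h - 1) = (-a)^(Suc k)/(P2*P3)"
      unfolding k diff_Suc_1 P2_def P3_def a_def by (rule yseq_diff[OF a])
    show ?thesis unfolding e using p2 p3 a0 by (simp add: abs_divide power_abs abs_mult)
  qed
  have u2: "P2 \<le> al^(Suc (Suc k))" unfolding P2_def using pp_upper[OF a0 al1 alq, of "Suc k"] by blast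
  have u3: "P3 \<le> al^(Suc (Suc (Suc k)))" unfolding P3_def using pp_upper[OF a0 al1 alq, of "Suc (Suc k)"] by blast
  have l2: "al^(Suc (Suc k)) \<le> al^2 * P2" unfolding P2_def using pp_lower[OF a0 al1 alq, of k] by blast
  have l3: "al^(Suc (Suc (Suc k))) \<le> al^2 * P3" unfolding P3_def using pp_lower[OF a0 al1 alq, of "Suc k"] by blast
  have E: "al^(Suc (Suc k)) * al^(Suc (Suc (Suc k))) = al^(2*k+5)"
  proof -
    have "Suc (Suc k) + Suc (Suc (Suc k)) = 2*k+5" by simp
    then show ?thesis by (metis power_add)
  qed
  have X1: "P2 * P3 \<le> al^(2*k+5)"
  proof -
    have "0 \<le> al^(Suc (Suc k))" using al1 by simp
    then show ?thesis using mult_mono[OF u2 u3] p2 p3 E by simp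
  qed
  have X2: "al^(2*k+5) \<le> al^4 * (P2 * P3)"
  proof -
    have "al^(Suc (Suc k)) * al^(Suc (Suc (Suc k))) \<le> (al^2 * P2) * (al^2 * P3)"
      using mult_mono[OF l2 l3] p2 p3 al1 by simp
    then show ?thesis using E by (simp add: algebra_simps power2_eq_square power4_eq_xxxx)
  qed
  have pos: "P2 * P3 > 0" using p2 p3 by simp
  have alp: "al > 0" using al1 by simp
  have qk: "q^(Suc (Suc k)) = a^(Suc (Suc k)) / al^(2*k+4)"
    by (simp add: q_def a_def power_divide power_mult[symmetric] algebra_simps power_add)
  have "(1/(q*al^3)) * q^h = a^(Suc k) / al^(2*k+5)"
    unfolding k qk using a0 alp by (simp add: q_def a_def field_simps power2_eq_square power3_eq_cube power_add numeral_eq_Suc) 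
  also have "\<dots> \<le> a^(Suc k) / (P2*P3)"
    using X1 pos a0 by (intro divide_left_mono) auto
  finally show "(1/(q*al^3)) * q^h \<le> \<bar>yseq lam D h - yseq lam D (h - 1)\<bar>" using dd by simp
  have "a^(Suc k) / (P2*P3) \<le> a^(Suc k) / (al^(2*k+5) / al^4)"
  proof (rule divide_left_mono)
    show "al^(2*k+5) / al^4 \<le> P2*P3" using X2 alp by (simp add: divide_le_eq algebra_simps)
    show "0 \<le> a^(Suc k)" using a0 by simp
    have "0 < al^(2*k+5) / al^4" using alp by simp
    then show "0 < P2 * P3 * (al^(2*k+5) / al^4)" using pos by (rule mult_pos_pos[rotated])
  qed
  also have "\<dots> = (al/q) * q^h"
    unfolding k qk using a0 alp by (simp add: q_def a_def field_simps power2_eq_square power3_eq_cube power_add numeral_eq_Suc)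
  finally show "\<bar>yseq lam D h - yseq lam D (h - 1)\<bar> \<le> (al/q) * q^h" using dd by simp
qed

lemma abstract_lim:
  fixes d :: "nat \<Rightarrow> real" and q m M :: real
  assumes q0: "0 < q" and q1: "q < 1" and m0: "0 < m" and M0: "0 < M"
    and lo: "\<And>h. h \<ge> 2 \<Longrightarrow> m * q^h \<le> \<bar>d h\<bar>"
    and hi: "\<And>h. h \<ge> 2 \<Longrightarrow> \<bar>d h\<bar> \<le> M * q^h"
  shows "((\<lambda>e. real (Sup {h::nat. h \<ge> 2 \<and> \<bar>d h\<bar> \<ge> e}) / ln (1/e)) \<longlongrightarrow> inverse (- ln q)) (at_right 0)"
proof -
  define K where "K = - ln q"
  have K: "K > 0" using q0 q1 by (simp add: K_def)
  have lim1: "((\<lambda>e. ((ln(1/e) + ln m)/K - 1)/ln(1/e)) \<longlongrightarrow> inverse K) (at_right 0)"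
    using K by real_asymp
  have lim2: "((\<lambda>e. ((ln(1/e) + ln M)/K)/ln(1/e)) \<longlongrightarrow> inverse K) (at_right 0)"
    using K by real_asymp
  have e0: "0 < min 1 (m*q^2)" using m0 q0 by simp
  have ev: "eventually (\<lambda>e. e \<in> {0<..<min 1 (m*q^2)}) (at_right 0)"
    by (rule eventually_at_right_real[OF e0])
  have key: "eventually (\<lambda>e. ((ln(1/e) + ln m)/K - 1)/ln(1/e) \<le> real (Sup {h::nat. h \<ge> 2 \<and> \<bar>d h\<bar> \<ge> e}) / ln (1/e)
       \<and> real (Sup {h::nat. h \<ge> 2 \<and> \<bar>d h\<bar> \<ge> e}) / ln (1/e) \<le> ((ln(1/e) + ln M)/K)/ln(1/e)) (at_right 0)"
    using ev
  proof (rule eventually_mono)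
    fix e :: real assume "e \<in> {0<..<min 1 (m*q^2)}"
    then have e: "0 < e" "e < 1" "e < m*q^2" by auto
    define S where "S = {h::nat. h \<ge> 2 \<and> \<bar>d h\<bar> \<ge> e}"
    have 2: "2 \<in> S" using lo[of 2] e by (auto simp: S_def)
    have "(\<lambda>n. M * q^n) \<longlonglongrightarrow> M * 0"
      by (intro tendsto_intros LIMSEQ_power_zero) (use q0 q1 in simp)
    then have "eventually (\<lambda>n. M * q^n < e) sequentially"
      using e(1) by (intro order_tendstoD(2)) auto
    then obtain N where N: "M * q^N < e" by (auto simp: eventually_sequentially)
    have sub: "S \<subseteq> {..<N}"
    proof
      fix h assume hS: "h \<in> S"
      show "h \<in> {..<N}"
      proof (rule ccontr)
        assume "h \<notin> {..<N}"
        then have "N \<le> h" by simp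
        then have "q^h \<le> q^N" using q0 q1 by (intro power_decreasing) auto
        then have "M * q^h \<le> M * q^N" using M0 by simp
        moreover have "\<bar>d h\<bar> \<le> M * q^h" using hS hi by (auto simp: S_def)
        ultimately show False using hS N by (auto simp: S_def)
      qed
    qed
    have fin: "finite S" using sub finite_subset by blast
    have ne: "S \<noteq> {}" using 2 by blast
    define h where "h = Max S"
    have SupS: "Sup S = h" unfolding h_def using fin ne by (rule cSup_eq_Max)
    have hS: "h \<in> S" unfolding h_def using fin ne by (rule Max_in)
    have "Suc h \<notin> S"
    proof
      assume "Suc h \<in> S"
      then have "Suc h \<le> h" unfolding h_def using fin by (simp add: Max_ge)
      then show False by simp
    qed
    then have dS: "\<bar>d (Suc h)\<bar> < e" using hS by (auto simp: S_def)
    have h2: "h \<ge> 2" using hS by (simp add: S_def)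
    have up: "e \<le> M * q^h" using hS hi[OF h2] by (auto simp: S_def)
    have low: "m * q^(Suc h) < e" using lo[of "Suc h"] h2 dS by simp
    define x where "x = ln (1/e)"
    have x: "x = - ln e" using e by (simp add: x_def ln_div)
    have x0: "x > 0" using e by (simp add: x_def)
    have "ln e \<le> ln (M * q^h)" using up e by simp
    also have "\<dots> = ln M + real h * ln q" using M0 q0 by (simp add: ln_mult ln_realpow)
    finally have A: "real h * K \<le> x + ln M" using x by (simp add: K_def)
    have "ln (m * q^(Suc h)) < ln e" using low m0 q0 e by (subst ln_less_cancel_iff) auto
    moreover have "ln (m * q^(Suc h)) = ln m + real (Suc h) * ln q" using m0 q0 by (simp add: ln_mult ln_realpow algebra_simps)
    ultimately have B: "x + ln m < (real h + 1) * K" using x by (simp add: K_def algebra_simps)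
    have A': "real h \<le> (x + ln M)/K" using A K by (simp add: field_simps)
    have B': "(x + ln m)/K - 1 \<le> real h" using B K by (simp add: field_simps)
    show "((ln(1/e) + ln m)/K - 1)/ln(1/e) \<le> real (Sup S) / ln (1/e)
       \<and> real (Sup S) / ln (1/e) \<le> ((ln(1/e) + ln M)/K)/ln(1/e)"
      unfolding SupS x_def[symmetric]
      using divide_right_mono[OF A', of x] divide_right_mono[OF B', of x] x0 by simp
  qed
  have "((\<lambda>e. real (Sup {h::nat. h \<ge> 2 \<and> \<bar>d h\<bar> \<ge> e}) / ln (1/e)) \<longlongrightarrow> inverse K) (at_right 0)"
    by (rule tendsto_sandwich[OF _ _ lim1 lim2]) (use key in \<open>auto elim: eventually_mono\<close>)
  then show ?thesis by (simp add: K_def)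
qed

lemma g_lim: "((\<lambda>x::real. sqrt x * ln(((1+sqrt(1+4*x))/2)^2/x)) \<longlongrightarrow> 1) at_top"
  by real_asymp

theorem lemma3:
  fixes lam :: real
  assumes "lam > 0"
  shows "(\<forall>D::real. D \<ge> 1 \<longrightarrow>
            yseq lam D \<longlonglongrightarrow> 2 / (1 + sqrt (1 + 4 * lam * D)))
       \<and> (\<exists>L :: real \<Rightarrow> real.
            (\<forall>D::real. D \<ge> 1 \<longrightarrow>
               ((\<lambda>eps. real (hlow lam D eps) / ln (1 / eps)) \<longlongrightarrow> L D) (at_right 0))
            \<and> ((\<lambda>D. L D / sqrt D) \<longlongrightarrow> sqrt lam) at_top)"
proof (intro conjI allI impI)
  fix D :: real assume "D \<ge> 1"
  then have "lam * D > 0" using assms by simp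
  then show "yseq lam D \<longlonglongrightarrow> 2 / (1 + sqrt (1 + 4 * lam * D))" by (rule yseq_lim)
next
  define L where "L = (\<lambda>D::real. 1 / ln (((1 + sqrt (1 + 4*(lam*D)))/2)^2/(lam*D)))"
  show "\<exists>L :: real \<Rightarrow> real.
            (\<forall>D::real. D \<ge> 1 \<longrightarrow>
               ((\<lambda>eps. real (hlow lam D eps) / ln (1 / eps)) \<longlongrightarrow> L D) (at_right 0))
            \<and> ((\<lambda>D. L D / sqrt D) \<longlongrightarrow> sqrt lam) at_top"
  proof (intro exI[of _ L] conjI allI impI)
    fix D :: real assume D: "D \<ge> 1"
    have a: "lam * D > 0" using D assms by simp
    define al where "al = (1 + sqrt (1 + 4 * (lam*D))) / 2"
    define q where "q = lam * D / al^2"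
    have al1: "al \<ge> 1" and alq: "al*al = al + lam*D"
      using al_facts[OF a] by (simp_all add: al_def)
    have q0: "q > 0" using a al1 by (simp add: q_def)
    have q1: "q < 1" using a al1 alq by (simp add: q_def power2_eq_square)
    have "((\<lambda>e. real (Sup {h::nat. h \<ge> 2 \<and> \<bar>yseq lam D h - yseq lam D (h - 1)\<bar> \<ge> e}) / ln (1/e))
           \<longlongrightarrow> inverse (- ln q)) (at_right 0)"
    proof (rule abstract_lim[OF q0 q1])
      show "0 < 1/(q*al^3)" using q0 al1 by simp
      show "0 < al/q" using q0 al1 by simp
      show "1/(q*al^3) * q^h \<le> \<bar>yseq lam D h - yseq lam D (h - 1)\<bar>" if "h \<ge> 2" for h
        using d_bounds(1)[OF a that] by (simp add: al_def q_def)
      show "\<bar>yseq lam D h - yseq lam D (h - 1)\<bar> \<le> al/q * q^h" if "h \<ge> 2" for h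
        using d_bounds(2)[OF a that] by (simp add: al_def q_def)
    qed
    moreover have "inverse (- ln q) = L D"
    proof -
      have LD: "L D = 1 / ln (al^2/(lam*D))" unfolding L_def al_def by simp
      have "ln (al^2/(lam*D)) = - ln q" using a al1 by (simp add: q_def ln_div)
      then show ?thesis unfolding LD by (simp add: inverse_eq_divide)
    qed
    ultimately show "((\<lambda>eps. real (hlow lam D eps) / ln (1 / eps)) \<longlongrightarrow> L D) (at_right 0)"
      unfolding hlow_def by simp
  next
    have f: "filterlim (\<lambda>D. lam * D) at_top at_top"
      using assms by (intro filterlim_tendsto_pos_mult_at_top[OF tendsto_const] filterlim_ident)
    have "((\<lambda>D. sqrt lam / (sqrt (lam*D) * ln(((1+sqrt(1+4*(lam*D)))/2)^2/(lam*D)))) \<longlongrightarrow> sqrt lam / 1) at_top"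
      by (intro tendsto_divide tendsto_const filterlim_compose[OF g_lim f]) simp
    moreover have "eventually (\<lambda>D. sqrt lam / (sqrt (lam*D) * ln(((1+sqrt(1+4*(lam*D)))/2)^2/(lam*D))) = L D / sqrt D) at_top"
      using eventually_gt_at_top[of 0]
    proof (rule eventually_mono)
      fix D :: real assume "D > 0"
      then show "sqrt lam / (sqrt (lam*D) * ln(((1+sqrt(1+4*(lam*D)))/2)^2/(lam*D))) = L D / sqrt D"
        using assms by (simp add: L_def real_sqrt_mult)
    qed
    ultimately show "((\<lambda>D. L D / sqrt D) \<longlongrightarrow> sqrt lam) at_top"
      by (simp add: tendsto_cong)
  qed
qed
end
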